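(* Let $(S,\omega)$ be a real symplectic vector space of dimension $2$ with positive polarization $E$, and let $(g,z)\in\mathrm{Mp}_*(S,E)$ (so $\operatorname{tr}(g)\neq2$). Let $k\in\mathbb Z$ be such that $\arg(z)\in[k\tfrac\pi2,(k+1)\tfrac\pi2)$ and let $\epsilon=0$ if $\operatorname{tr}(g)>2$ and $\epsilon=1$ otherwise. Then $$m(g,z)=k+\tfrac12\big(1-(-1)^{k+\epsilon}\big)\mod 4.$$
   Context: A positive polarization of $S$ is a Lagrangian subspace $E\subset S\otimes\mathbb C$ with $\frac1i\omega(x,\bar x)>0$ for all nonzero $x\in E$. For positive polarizations $E_a,E_b$, $\pi_{E_b,E_a}:E_b\to E_a$ is the restriction to $E_b$ of the projection onto $E_a$ with kernel $\overline{E_b}$; $\Psi_{E_a,E_b}:=\pi_{E_b,E_a}^*$ on top exterior powers of duals; $\zeta(E_a,E_b,E_c)$ is defined by $\Psi_{E_a,E_c}=\zeta(E_a,E_b,E_c)\Psi_{E_b,E_c}\circ\Psi_{E_a,E_b}$ and $\zeta^{1/2}$ is its continuous square root equal to $1$ when the three coincide. $\mathrm{Mp}(S,E)$ is the group of pairs $(g,z)\in\mathrm{Sp}(S)\times\mathbb C$ with $z^2=\det(g^{-1}\pi_{E,gE}:E\to E)$, product $(g',z')(g,z)=(g'g,\zeta^{1/2}(g'gE,g'E,E)z'z)$. Let $j$ be the complex structure on $S$ with $E=\ker(j-i\,\mathrm{id})$; $\mathrm{sym}(S,j)$ is the space of endomorphisms symmetric for the scalar product $\omega(X,jY)$; for $A\in\mathrm{sym}(S,j)$,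 ${\det}^{1/2}(\tfrac12\mathrm{id}+iA)$ is the square root depending continuously on $A$ and positive at $A=0$. $\mathrm{Sp}_*(S)=\{g\in\mathrm{Sp}(S):\mathrm{id}-g\text{ invertible}\}$, $A(g):=\tfrac12(\mathrm{id}+g)(\mathrm{id}-g)^{-1}j$, $\mathrm{Mp}_*(S,E)=\{(g,z)\in\mathrm{Mp}(S,E):g\in\mathrm{Sp}_*(S)\}$. The index $m(g,z)\in\mathbb Z/4\mathbb Z$ is defined by $z\,{\det}^{1/2}(\tfrac12\mathrm{id}+iA(g))=i^{m(g,z)}/|\det(\mathrm{id}-g)|^{1/2}$. The argument $\arg(z)$ is taken in $\mathbb R/2\pi\mathbb Z$ (so $k$ is determined mod 4). *)

theory Defs
  imports "HOL-Analysis.Analysis"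
begin

text \<open>The real symplectic vector space of dimension 2 is modelled as real^2 with an
  arbitrary symplectic (bilinear, antisymmetric, nondegenerate) form.\<close>

definition symplectic_form :: "(real^2 \<Rightarrow> real^2 \<Rightarrow> real) \<Rightarrow> bool" where
  "symplectic_form \<omega> \<longleftrightarrow>
     (\<forall>y. linear (\<lambda>x. \<omega> x y)) \<and> (\<forall>x. linear (\<lambda>y. \<omega> x y)) \<and>
     (\<forall>x y. \<omega> x y = - \<omega> y x) \<and>
     (\<forall>x. (\<forall>y. \<omega> x y = 0) \<longrightarrow> x = 0)"

definition cvec :: "real^2 \<Rightarrow> complex^2" where
  "cvec x = (\<chi> i. complex_of_real (x $ i))"

definition cre :: "complex^2 \<Rightarrow> real^2" where "cre u = (\<chi> i. Re (u $ i))"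
definition cim :: "complex^2 \<Rightarrow> real^2" where "cim u = (\<chi> i. Im (u $ i))"

definition cconj :: "complex^2 \<Rightarrow> complex^2" where
  "cconj u = (\<chi> i. cnj (u $ i))"

definition cmat :: "real^2^2 \<Rightarrow> complex^2^2" where
  "cmat g = (\<chi> i j. complex_of_real (g $ i $ j))"

text \<open>Complex-bilinear extension of \<omega> to S \<otimes> C.\<close>
definition omegac :: "(real^2 \<Rightarrow> real^2 \<Rightarrow> real) \<Rightarrow> complex^2 \<Rightarrow> complex^2 \<Rightarrow> complex" where
  "omegac \<omega> u v =
     Complex (\<omega> (cre u) (cre v) - \<omega> (cim u) (cim v)) (\<omega> (cre u) (cim v) + \<omega> (cim u) (cre v))"

definition csubspace :: "(complex^2) set \<Rightarrow> bool" where
  "csubspace E \<longleftrightarrow> 0 \<in> E \<and> (\<forall>x\<in>E. \<forall>y\<in>E. x + y \<in> E) \<and> (\<forall>c::complex. \<forall>x\<in>E. c *s x \<in> E)"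

definition lagrangian :: "(real^2 \<Rightarrow> real^2 \<Rightarrow> real) \<Rightarrow> (complex^2) set \<Rightarrow> bool" where
  "lagrangian \<omega> E \<longleftrightarrow> csubspace E \<and> E = {x. \<forall>y\<in>E. omegac \<omega> x y = 0}"

definition positive_polarization :: "(real^2 \<Rightarrow> real^2 \<Rightarrow> real) \<Rightarrow> (complex^2) set \<Rightarrow> bool" where
  "positive_polarization \<omega> E \<longleftrightarrow> lagrangian \<omega> E \<and>
     (\<forall>x\<in>E. x \<noteq> 0 \<longrightarrow>
        Im (omegac \<omega> x (cconj x) / \<i>) = 0 \<and> Re (omegac \<omega> x (cconj x) / \<i>) > 0)"

definition symplectic :: "(real^2 \<Rightarrow> real^2 \<Rightarrow> real) \<Rightarrow> real^2^2 \<Rightarrow> bool" where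
  "symplectic \<omega> g \<longleftrightarrow> invertible g \<and> (\<forall>x y. \<omega> (g *v x) (g *v y) = \<omega> x y)"

text \<open>pi_{Eb,Ea}: restriction to Eb of the projection onto Ea with kernel conj(Eb).\<close>
definition proj_pol :: "(complex^2) set \<Rightarrow> (complex^2) set \<Rightarrow> complex^2 \<Rightarrow> complex^2" where
  "proj_pol Eb Ea u = (THE w. w \<in> Ea \<and> u - w \<in> cconj ` Eb)"

text \<open>Determinant of a complex-linear endomorphism T of a complex line E
  (a Lagrangian of a 2-dimensional symplectic space is a complex line):
  the scalar by which T acts on E.\<close>
definition det_line :: "(complex^2) set \<Rightarrow> (complex^2 \<Rightarrow> complex^2) \<Rightarrow> complex" where
  "det_line E T = (THE c. \<forall>v\<in>E. T v = c *s v)"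

definition in_Mp :: "(real^2 \<Rightarrow> real^2 \<Rightarrow> real) \<Rightarrow> (complex^2) set \<Rightarrow> real^2^2 \<Rightarrow> complex \<Rightarrow> bool" where
  "in_Mp \<omega> E g z \<longleftrightarrow> symplectic \<omega> g \<and>
     z ^ 2 = det_line E (\<lambda>u. cmat (matrix_inv g) *v proj_pol E ((\<lambda>v. cmat g *v v) ` E) u)"

definition in_Mp_star :: "(real^2 \<Rightarrow> real^2 \<Rightarrow> real) \<Rightarrow> (complex^2) set \<Rightarrow> real^2^2 \<Rightarrow> complex \<Rightarrow> bool" where
  "in_Mp_star \<omega> E g z \<longleftrightarrow> in_Mp \<omega> E g z \<and> invertible (mat 1 - g)"

definition sym_j :: "(real^2 \<Rightarrow> real^2 \<Rightarrow> real) \<Rightarrow> real^2^2 \<Rightarrow> (real^2^2) set" where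
  "sym_j \<omega> j = {A. \<forall>X Y. \<omega> (A *v X) (j *v Y) = \<omega> X (j *v (A *v Y))}"

definition half_plus_iA :: "real^2^2 \<Rightarrow> complex^2^2" where
  "half_plus_iA A = mat (1/2) + (\<chi> i k. \<i> * complex_of_real (A $ i $ k))"

definition det_sqrt :: "(real^2 \<Rightarrow> real^2 \<Rightarrow> real) \<Rightarrow> real^2^2 \<Rightarrow> real^2^2 \<Rightarrow> complex" where
  "det_sqrt \<omega> j A = (THE r. \<exists>f. continuous_on (sym_j \<omega> j) f \<and>
      (\<forall>B\<in>sym_j \<omega> j. (f B) ^ 2 = det (half_plus_iA B)) \<and>
      Im (f 0) = 0 \<and> Re (f 0) > 0 \<and> f A = r)"

definition A_of :: "real^2^2 \<Rightarrow> real^2^2 \<Rightarrow> real^2^2" where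
  "A_of j g = (1/2) *\<^sub>R ((mat 1 + g) ** matrix_inv (mat 1 - g) ** j)"

text \<open>The index m(g,z) \<in> Z/4Z, represented by its representative in {0..3}.\<close>
definition mp_index :: "(real^2 \<Rightarrow> real^2 \<Rightarrow> real) \<Rightarrow> real^2^2 \<Rightarrow> real^2^2 \<Rightarrow> complex \<Rightarrow> int" where
  "mp_index \<omega> j g z = (THE m. 0 \<le> m \<and> m < 4 \<and>
      z * det_sqrt \<omega> j (A_of j g) = \<i> powi m / complex_of_real (sqrt \<bar>det (mat 1 - g)\<bar>))"

end

theory Submission
  imports Defs
begin


lemma mm2: "((A::'a::semiring_1^2^2) ** B) $ i $ k = A$i$1 * B$1$k + A$i$2 * B$2$k"
  by (simp add: matrix_matrix_mult_def sum_2)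
lemma mv2: "((A::'a::semiring_1^2^2) *v x) $ i = A$i$1 * x$1 + A$i$2 * x$2"
  by (simp add: matrix_vector_mult_def sum_2)
lemma mat2: "(mat c :: 'a::zero^2^2) $ i $ k = (if i = k then c else 0)"
  by (simp add: mat_def)
lemma vec2_eq: "(x::'a^2) = y \<longleftrightarrow> x$1 = y$1 \<and> x$2 = y$2"
  by (simp add: vec_eq_iff forall_2)
lemma mat2_eq: "(A::'a^2^2) = B \<longleftrightarrow> A$1$1 = B$1$1 \<and> A$1$2 = B$1$2 \<and> A$2$1 = B$2$1 \<and> A$2$2 = B$2$2"
  by (simp add: vec_eq_iff forall_2)
lemma two_ne: "(1::2) \<noteq> 2" "(2::2) \<noteq> 1" by simp_all

lemma omega_coord:
  assumes "symplectic_form \<omega>"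
  shows "\<omega> x y = \<omega> (axis 1 1) (axis 2 1) * (x$1 * y$2 - x$2 * y$1)"
proof -
  let ?e1 = "axis 1 1 :: real^2" and ?e2 = "axis 2 1 :: real^2"
  have dec: "\<And>u::real^2. u = u$1 *\<^sub>R ?e1 + u$2 *\<^sub>R ?e2"
    by (simp add: vec2_eq axis_def)
  have l1: "\<And>y. linear (\<lambda>x. \<omega> x y)" using assms unfolding symplectic_form_def by blast
  have l2: "\<And>x. linear (\<lambda>y. \<omega> x y)" using assms unfolding symplectic_form_def by blast
  have as: "\<And>x y. \<omega> x y = - \<omega> y x" using assms unfolding symplectic_form_def by blast
  have z1: "\<omega> ?e1 ?e1 = 0" "\<omega> ?e2 ?e2 = 0" using as[of ?e1 ?e1] as[of ?e2 ?e2] by linarith+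
  have s: "\<omega> ?e2 ?e1 = - \<omega> ?e1 ?e2" using as by blast
  have "\<omega> x y = \<omega> (x$1 *\<^sub>R ?e1 + x$2 *\<^sub>R ?e2) (y$1 *\<^sub>R ?e1 + y$2 *\<^sub>R ?e2)"
    by (rule arg_cong2[where f=\<omega>]; rule dec)
  also have "\<dots> = x$1 * (y$1 * \<omega> ?e1 ?e1 + y$2 * \<omega> ?e1 ?e2) + x$2 * (y$1 * \<omega> ?e2 ?e1 + y$2 * \<omega> ?e2 ?e2)"
    by (simp add: linear_add[OF l1] linear_scale[OF l1] linear_add[OF l2] linear_scale[OF l2] algebra_simps)
  finally show ?thesis using z1 s by (simp add: algebra_simps)
qed

lemma omega_nz:
  assumes "symplectic_form \<omega>"
  shows "\<omega> (axis 1 1) (axis 2 1) \<noteq> 0"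
proof
  assume h: "\<omega> (axis 1 1) (axis 2 1) = 0"
  have "\<forall>y. \<omega> (axis 1 1) y = 0"
  proof
    fix y show "\<omega> (axis 1 1) y = 0" using omega_coord[OF assms, of "axis 1 1" y] h by simp
  qed
  moreover have nd: "\<forall>x. (\<forall>y. \<omega> x y = 0) \<longrightarrow> x = 0" using assms unfolding symplectic_form_def by blast
  ultimately have "(axis 1 1::real^2) = 0" by blast
  thus False by (simp add: axis_def vec2_eq)
qed

lemma omega_ex:
  assumes "symplectic_form \<omega>"
  obtains c where "c \<noteq> 0" "\<And>x y. \<omega> x y = c * (x$1 * y$2 - x$2 * y$1)"
  using omega_coord[OF assms] omega_nz[OF assms] by blast



lemma j_facts:
  fixes j :: "real^2^2"
  assumes "j ** j = - mat 1"
  shows "j$1$1 * j$1$1 + j$1$2 * j$2$1 = -1" "j$2$2 = - j$1$1" "j$1$2 \<noteq> 0"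
proof -
  from assms have e: "(j**j)$1$1 = -1" "(j**j)$1$2 = 0" by (simp_all add: mat2)
  show h1: "j$1$1 * j$1$1 + j$1$2 * j$2$1 = -1" using e by (simp add: mm2)
  show q: "j$1$2 \<noteq> 0"
  proof
    assume "j$1$2 = 0" with h1 have "j$1$1 * j$1$1 = -1" by simp
    moreover have "j$1$1 * j$1$1 \<ge> 0" by simp
    ultimately show False by linarith
  qed
  have "j$1$2 * (j$1$1 + j$2$2) = 0" using e by (simp add: mm2 algebra_simps)
  with q show "j$2$2 = - j$1$1" by simp
qed

definition delta :: "real^2^2 \<Rightarrow> real^2^2 \<Rightarrow> real" where
  "delta j B = - j$1$1 * B$1$1 - j$1$2 * B$2$1 - j$2$1 * B$1$2 + j$1$1 * B$2$2"


lemma sym_j_char: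
  assumes "symplectic_form \<omega>" "j$2$2 = - j$1$1"
  shows "B \<in> sym_j \<omega> j \<longleftrightarrow> delta j B = 0"
proof -
  obtain c where c: "c \<noteq> 0" and om: "\<And>x y. \<omega> x y = c * (x$1 * y$2 - x$2 * y$1)"
    using omega_ex[OF assms(1)] by blast
  have key: "\<And>X Y. \<omega> (B *v X) (j *v Y) - \<omega> X (j *v (B *v Y)) = c * delta j B * (X$1*Y$2 - X$2*Y$1)"
    unfolding om using assms(2) by (simp add: mv2 delta_def algebra_simps)
  show ?thesis
  proof
    assume "B \<in> sym_j \<omega> j"
    hence "\<omega> (B *v axis 1 1) (j *v axis 2 1) - \<omega> (axis 1 1) (j *v (B *v axis 2 1)) = 0"
      unfolding sym_j_def by simp
    hence "c * delta j B * 1 = 0" using key[of "axis 1 1" "axis 2 1"] by (simp add: axis_def)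
    thus "delta j B = 0" using c by simp
  next
    assume "delta j B = 0"
    hence "\<And>X Y. \<omega> (B *v X) (j *v Y) - \<omega> X (j *v (B *v Y)) = 0" using key by simp
    thus "B \<in> sym_j \<omega> j" unfolding sym_j_def by simp
  qed
qed


lemma D_formula:
  "det (half_plus_iA B) = Complex (1/4 - (B$1$1*B$2$2 - B$1$2*B$2$1)) ((B$1$1 + B$2$2)/2)"
  by (simp add: det_2 half_plus_iA_def mat2 complex_eq_iff algebra_simps)



lemma sq_lemma:
  fixes p q r b11 b12 b21 :: real
  assumes qr: "q*r = -1 - p*p" and dl: "r * b12 + 2*p*b11 + q * b21 = 0" and q: "q \<noteq> 0"
  shows "b11*b11 + b12*b21 \<ge> 0"
proof -
  have qb: "q*b21 = - r * b12 - 2*p*b11" using dl by linarith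
  have e2: "q*q*(b11*b11 + b12*b21) = q*q*b11*b11 + q*b12*(q*b21)" by (simp add: algebra_simps)
  also have "\<dots> = q*q*b11*b11 + q*b12*(- r * b12 - 2*p*b11)" by (simp only: qb)
  also have "\<dots> = q*q*b11*b11 - (q*r)*b12*b12 - 2*p*q*b11*b12" by (simp add: algebra_simps)
  also have "\<dots> = q*q*b11*b11 - (-1-p*p)*b12*b12 - 2*p*q*b11*b12" by (simp only: qr)
  also have "\<dots> = (q*b11 - p*b12)^2 + b12^2" by (simp add: power2_eq_square algebra_simps)
  finally have "q*q*(b11*b11 + b12*b21) \<ge> 0" by simp
  moreover have "q*q > 0" using q by (auto simp: zero_less_mult_iff linorder_neq_iff)
  ultimately show ?thesis by (simp add: zero_le_mult_iff)
qed

lemma D_not_nonpos: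
  fixes j B :: "real^2^2"
  assumes "delta j B = 0" "j ** j = - mat 1"
  shows "det (half_plus_iA B) \<notin> \<real>\<^sub>\<le>\<^sub>0"
proof
  assume "det (half_plus_iA B) \<in> \<real>\<^sub>\<le>\<^sub>0"
  hence h: "B$1$1 + B$2$2 = 0" "1/4 - (B$1$1*B$2$2 - B$1$2*B$2$1) \<le> 0"
    unfolding D_formula complex_nonpos_Reals_iff by auto
  note jf = j_facts[OF assms(2)]
  have b22: "B$2$2 = - B$1$1" using h(1) by linarith
  have dl: "j$2$1 * B$1$2 + 2*j$1$1*B$1$1 + j$1$2 * B$2$1 = 0"
    using assms(1) b22 unfolding delta_def by (simp add: algebra_simps)
  have "B$1$1*B$1$1 + B$1$2*B$2$1 \<ge> 0"
    by (rule sq_lemma[OF _ dl jf(3)]) (use jf(1) in linarith)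
  with h(2) b22 show False by (simp add: algebra_simps)
qed



lemma matrix_inv_eq:
  fixes A :: "'a::comm_ring_1^'n^'n"
  assumes "invertible A" "A ** M = mat 1"
  shows "matrix_inv A = M"
proof -
  have h: "A ** matrix_inv A = mat 1 \<and> matrix_inv A ** A = mat 1"
    using assms(1) unfolding invertible_def matrix_inv_def by (rule someI_ex)
  have "matrix_inv A = matrix_inv A ** (A ** M)" using assms(2) by (simp add: matrix_mul_rid)
  also have "\<dots> = (matrix_inv A ** A) ** M" by (simp add: matrix_mul_assoc)
  also have "\<dots> = M" using h by (simp add: matrix_mul_lid)
  finally show ?thesis .
qed

lemma matrix_inv_left:
  fixes A :: "'a::comm_ring_1^'n^'n"
  assumes "invertible A"
  shows "matrix_inv A ** A = mat 1"
proof -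
  have "A ** matrix_inv A = mat 1 \<and> matrix_inv A ** A = mat 1"
    using assms(1) unfolding invertible_def matrix_inv_def by (rule someI_ex)
  thus ?thesis by simp
qed

lemma A_of_explicit:
  fixes g j :: "real^2^2"
  defines "t \<equiv> g$1$1 + g$2$2"
  assumes dg: "g$1$1*g$2$2 - g$1$2*g$2$1 = 1" and inv: "invertible (mat 1 - g)" and t2: "2 - t \<noteq> 0"
  shows "A_of j g = (1/(2*(2-t))) *\<^sub>R ((2 *\<^sub>R g - t *\<^sub>R mat 1) ** j)"
proof -
  have mi: "matrix_inv (mat 1 - g) = (1/(2-t)) *\<^sub>R ((1-t) *\<^sub>R mat 1 + g)"
  proof (rule matrix_inv_eq[OF inv])
    show "(mat 1 - g) ** ((1/(2-t)) *\<^sub>R ((1-t) *\<^sub>R mat 1 + g)) = mat 1"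
      unfolding mat2_eq using t2 dg unfolding t_def 
      by (simp add: mm2 mat2 divide_simps) (simp add: algebra_simps)
  qed
  have p: "(mat 1 + g) ** matrix_inv (mat 1 - g) = (1/(2-t)) *\<^sub>R (2 *\<^sub>R g - t *\<^sub>R mat 1)"
    unfolding mi mat2_eq using t2 dg unfolding t_def
    by (simp add: mm2 mat2 divide_simps) (simp add: algebra_simps)
  show ?thesis unfolding A_of_def p mat2_eq using t2
    by (simp add: mm2 mat2 divide_simps)
qed



definition det2 :: "complex^2 \<Rightarrow> complex^2 \<Rightarrow> complex" where
  "det2 x y = x$1 * y$2 - x$2 * y$1"

lemma cramer:
  assumes "det2 x y \<noteq> 0"
  shows "u = (det2 u y / det2 x y) *s x + (det2 x u / det2 x y) *s y"
proof -
  let ?D = "det2 x y"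
  have h: "?D * u$1 = det2 u y * x$1 + det2 x u * y$1" "?D * u$2 = det2 u y * x$2 + det2 x u * y$2"
    unfolding det2_def by (simp_all add: algebra_simps)
  show ?thesis unfolding vec2_eq using h assms by (simp add: field_simps)
qed

lemma cmat_comp: "(cmat A ** cmat B) = cmat (A ** B)"
  unfolding mat2_eq by (simp add: cmat_def mm2)

lemma cmat_one: "cmat (mat 1) = mat 1"
  unfolding mat2_eq by (simp add: cmat_def mat2)

lemma cmat_smult: "cmat A *v (c *s x) = c *s (cmat A *v x)"
  unfolding vec2_eq by (simp add: mv2 algebra_simps)

lemma E_char:
  fixes j :: "real^2^2"
  assumes jf: "j$1$1 * j$1$1 + j$1$2 * j$2$1 = -1" "j$2$2 = - j$1$1" "j$1$2 \<noteq> 0"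
  defines "v \<equiv> vector [complex_of_real (j$1$2), \<i> - complex_of_real (j$1$1)] :: complex^2"
  shows "{u. cmat j *v u = \<i> *s u} = range (\<lambda>l. l *s v)"
proof -
  define p where "p = j$1$1" define q where "q = j$1$2" define r where "r = j$2$1"
  have qr: "q*r = -1 - p*p" using jf(1) unfolding p_def q_def r_def by linarith
  have qr': "complex_of_real q * complex_of_real r = -1 - complex_of_real p * complex_of_real p"
    by (metis qr of_real_1 of_real_diff of_real_minus of_real_mult)
  have q: "complex_of_real q \<noteq> 0" using jf(3) unfolding q_def by simp
  have jc: "\<And>u. cmat j *v u = \<i> *s u \<longleftrightarrow>
     (of_real p * u$1 + of_real q * u$2 = \<i> * u$1 \<and> of_real r * u$1 - of_real p * u$2 = \<i> * u$2)"
    unfolding vec2_eq using jf(2) by (simp add: mv2 cmat_def p_def q_def r_def)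
  show ?thesis
  proof (intro set_eqI iffI)
    fix u assume "u \<in> {u. cmat j *v u = \<i> *s u}"
    hence e: "of_real p * u$1 + of_real q * u$2 = \<i> * u$1" using jc by blast
    have "u = (u$1 / of_real q) *s v"
      unfolding vec2_eq v_def p_def[symmetric] q_def[symmetric] using q e
      by (simp add: field_simps)
    thus "u \<in> range (\<lambda>l. l *s v)" by blast
  next
    fix u assume "u \<in> range (\<lambda>l. l *s v)"
    then obtain l where u: "u = l *s v" by blast
    have "of_real p * u$1 + of_real q * u$2 = \<i> * u$1 \<and> of_real r * u$1 - of_real p * u$2 = \<i> * u$2"
      unfolding u v_def p_def[symmetric] q_def[symmetric]
      by (simp add: algebra_simps qr')
    thus "u \<in> {u. cmat j *v u = \<i> *s u}" using jc by blast
  qed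
qed



lemma det2_lin: "det2 (a *s x - b *s y) z = a * det2 x z - b * det2 y z"
  "det2 (c *s z) z = 0"
  unfolding det2_def by (simp_all add: algebra_simps)

lemma cconj_smult: "cconj (l *s x) = cnj l *s cconj x"
  unfolding vec2_eq cconj_def by simp

lemma det_line_alpha:
  fixes g :: "real^2^2" and v :: "complex^2"
  defines "gv \<equiv> cmat g *v v" and "vb \<equiv> cconj v"
  assumes E: "E = range (\<lambda>l. l *s v)" and v1: "v$1 \<noteq> 0" and ig: "invertible g"
    and N: "det2 gv vb \<noteq> 0"
  shows "det_line E (\<lambda>u. cmat (matrix_inv g) *v proj_pol E ((\<lambda>w. cmat g *v w) ` E) u)
       = det2 v vb / det2 gv vb"
proof -
  define \<alpha> where "\<alpha> = det2 v vb / det2 gv vb"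
  define \<beta> where "\<beta> = det2 gv v / det2 gv vb"
  have cr: "v = \<alpha> *s gv + \<beta> *s vb" unfolding \<alpha>_def \<beta>_def by (rule cramer[OF N])
  have gE: "(\<lambda>w. cmat g *v w) ` E = range (\<lambda>l. l *s gv)"
    unfolding E gv_def by (auto simp: cmat_smult image_iff)
  have cE: "cconj ` E = range (\<lambda>l. l *s vb)"
  proof (intro set_eqI iffI)
    fix x assume "x \<in> cconj ` E" thus "x \<in> range (\<lambda>l. l *s vb)"
      unfolding E vb_def by (auto simp: cconj_smult)
  next
    fix x assume "x \<in> range (\<lambda>l. l *s vb)"
    then obtain l where "x = l *s vb" by blast
    hence "x = cconj ((cnj l) *s v)" unfolding vb_def by (simp add: cconj_smult)
    thus "x \<in> cconj ` E" unfolding E by blast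
  qed
  have proj: "proj_pol E ((\<lambda>w. cmat g *v w) ` E) (\<mu> *s v) = (\<mu> * \<alpha>) *s gv" for \<mu>
    unfolding proj_pol_def gE cE
  proof (rule the_equality)
    have "\<mu> *s v - (\<mu> * \<alpha>) *s gv = (\<mu> * \<beta>) *s vb"
    proof -
      have c1: "v$1 = \<alpha> * gv$1 + \<beta> * vb$1" "v$2 = \<alpha> * gv$2 + \<beta> * vb$2"
        using arg_cong[OF cr, of "\<lambda>x. x$1"] arg_cong[OF cr, of "\<lambda>x. x$2"] by simp_all
      show ?thesis unfolding vec2_eq using c1 by (simp add: algebra_simps)
    qed
    thus "(\<mu> * \<alpha>) *s gv \<in> range (\<lambda>l. l *s gv) \<and> \<mu> *s v - (\<mu> * \<alpha>) *s gv \<in> range (\<lambda>l. l *s vb)" by blast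
  next
    fix w assume "w \<in> range (\<lambda>l. l *s gv) \<and> \<mu> *s v - w \<in> range (\<lambda>l. l *s vb)"
    then obtain l n where w: "w = l *s gv" and n: "\<mu> *s v - l *s gv = n *s vb" by blast
    have "\<mu> * det2 v vb - l * det2 gv vb = 0"
      using arg_cong[OF n, of "\<lambda>x. det2 x vb"] by (simp add: det2_lin)
    hence "l = \<mu> * \<alpha>" unfolding \<alpha>_def using N by (simp add: field_simps)
    thus "w = (\<mu> * \<alpha>) *s gv" using w by simp
  qed
  have inv: "cmat (matrix_inv g) *v (cmat g *v x) = x" for x
    by (simp add: matrix_vector_mul_assoc cmat_comp matrix_inv_left[OF ig] cmat_one)
  show ?thesis unfolding \<alpha>_def[symmetric] det_line_def
  proof (rule the_equality)
    show "\<forall>u\<in>E. cmat (matrix_inv g) *v proj_pol E ((\<lambda>w. cmat g *v w) ` E) u = \<alpha> *s u"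
    proof
      fix u assume "u \<in> E"
      then obtain \<mu> where u: "u = \<mu> *s v" unfolding E by blast
      show "cmat (matrix_inv g) *v proj_pol E ((\<lambda>w. cmat g *v w) ` E) u = \<alpha> *s u"
        unfolding u proj gv_def cmat_smult inv by (simp add: mult.commute)
    qed
  next
    fix c assume h: "\<forall>u\<in>E. cmat (matrix_inv g) *v proj_pol E ((\<lambda>w. cmat g *v w) ` E) u = c *s u"
    have vE: "v \<in> E" unfolding E by (metis rangeI vector_smult_lid)
    have "\<alpha> = c \<or> v = 0" using h[rule_format, OF vE] proj[of 1] inv unfolding gv_def
      by (simp add: cmat_smult)
    moreover have "v \<noteq> 0" using v1 by auto
    ultimately show "c = \<alpha>" by auto
  qed
qed



lemma cconj_vec: "cconj (vector [a, b]) = vector [cnj a, cnj b]"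
  unfolding vec2_eq cconj_def by simp

lemma det2_vvb:
  fixes p q :: real
  shows "det2 (vector [of_real q, \<i> - of_real p]) (cconj (vector [of_real q, \<i> - of_real p])) = - 2 * \<i> * of_real q"
  unfolding cconj_vec det2_def by (simp add: complex_eq_iff)

lemma det2_gvvb:
  fixes g j :: "real^2^2"
  assumes "j$1$1 * j$1$1 + j$1$2 * j$2$1 = -1"
  defines "v \<equiv> vector [complex_of_real (j$1$2), \<i> - complex_of_real (j$1$1)] :: complex^2"
  shows "det2 (cmat g *v v) (cconj v) = - of_real (j$1$2) *
     (of_real (g$1$1 * j$1$1 + g$1$2 * j$2$1 + g$2$1 * j$1$2 - g$2$2 * j$1$1) + \<i> * of_real (g$1$1 + g$2$2))"
proof -
  have qr: "j$1$2 * j$2$1 = -1 - j$1$1 * j$1$1" using assms(1) by linarith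
  show ?thesis unfolding v_def cconj_vec det2_def
    by (simp add: mv2 cmat_def complex_eq_iff algebra_simps qr)
qed

lemma A_entries:
  fixes g j :: "real^2^2" and u t :: real
  assumes "j$2$2 = - j$1$1"
  defines "A \<equiv> u *\<^sub>R ((2 *\<^sub>R g - t *\<^sub>R mat 1) ** j)"
  shows "A$1$1 = u*((2*g$1$1 - t)*j$1$1 + 2*g$1$2*j$2$1)"
    "A$1$2 = u*((2*g$1$1 - t)*j$1$2 - 2*g$1$2*j$1$1)"
    "A$2$1 = u*(2*g$2$1*j$1$1 + (2*g$2$2 - t)*j$2$1)"
    "A$2$2 = u*(2*g$2$1*j$1$2 - (2*g$2$2 - t)*j$1$1)"
  unfolding A_def using assms(1) by (simp_all add: mm2 mat2 algebra_simps)

lemma alg_det: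
  fixes a b e d p q r u t :: real
  assumes "t = a + d" "a*d - b*e = 1" "p*p + q*r = -1"
  shows "(u*((2*a - t)*p + 2*b*r)) * (u*(2*e*q - (2*d - t)*p)) - (u*((2*a - t)*q - 2*b*p)) * (u*(2*e*p + (2*d - t)*r))
     = u*u*(4 - t*t)"
proof -
  have "(u*((2*a - t)*p + 2*b*r)) * (u*(2*e*q - (2*d - t)*p)) - (u*((2*a - t)*q - 2*b*p)) * (u*(2*e*p + (2*d - t)*r))
     = u*u*((2*a-t)*(2*d-t) - 4*b*e)*(-(p*p + q*r))" by (simp add: algebra_simps)
  also have "(2*a-t)*(2*d-t) - 4*b*e = 4*(a*d - b*e) - t*t" using assms(1) by (simp add: algebra_simps)
  finally show ?thesis using assms(2,3) by simp
qed

lemma alg_tr: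
  fixes a b e d p q r u t :: real
  assumes "t = a + d" "u = 1/(2*(2-t))" "2 - t \<noteq> 0"
  shows "u*((2*a - t)*p + 2*b*r) + u*(2*e*q - (2*d - t)*p) = (a*p + b*r + e*q - d*p)/(2-t)"
proof -
  have "u*((2*a - t)*p + 2*b*r) + u*(2*e*q - (2*d - t)*p) = 2*u*(a*p + b*r + e*q - d*p)"
    using assms(1) by (simp add: algebra_simps)
  also have "2*u*(a*p + b*r + e*q - d*p) = (a*p + b*r + e*q - d*p)/(2-t)"
    using assms(2,3) by (simp add: field_simps)
  finally show ?thesis .
qed

lemma alg_delta:
  fixes a b e d p q r u t :: real
  assumes "t = a + d" "p*p + q*r = -1"
  shows "- p * (u*((2*a - t)*p + 2*b*r)) - q * (u*(2*e*p + (2*d - t)*r)) - r * (u*((2*a - t)*q - 2*b*p))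
     + p * (u*(2*e*q - (2*d - t)*p)) = 0"
proof -
  have "- p * (u*((2*a - t)*p + 2*b*r)) - q * (u*(2*e*p + (2*d - t)*r)) - r * (u*((2*a - t)*q - 2*b*p))
     + p * (u*(2*e*q - (2*d - t)*p)) = u*((2*a - t) + (2*d - t))*(-(p*p + q*r))"
    by (simp add: algebra_simps)
  thus ?thesis using assms(1) by simp
qed

lemma aux_cancel: "(x::real) \<noteq> 0 \<Longrightarrow> (1/(2*x))*(1/(2*x))*(x*y) = y/(4*x)"
  by (simp add: field_simps)

lemma A_facts:
  fixes g j :: "real^2^2"
  defines "t \<equiv> g$1$1 + g$2$2"
  defines "A \<equiv> (1/(2*(2-t))) *\<^sub>R ((2 *\<^sub>R g - t *\<^sub>R mat 1) ** j)"
  defines "K \<equiv> g$1$1 * j$1$1 + g$1$2 * j$2$1 + g$2$1 * j$1$2 - g$2$2 * j$1$1"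
  assumes jf: "j$1$1 * j$1$1 + j$1$2 * j$2$1 = -1" "j$2$2 = - j$1$1"
    and dg: "g$1$1*g$2$2 - g$1$2*g$2$1 = 1" and t2: "2 - t \<noteq> 0"
  shows "delta j A = 0" "A$1$1 + A$2$2 = K/(2-t)"
    "A$1$1*A$2$2 - A$1$2*A$2$1 = (2+t)/(4*(2-t))"
proof -
  note ae = A_entries[OF jf(2), of "1/(2*(2-t))" g t, folded A_def]
  show "delta j A = 0" unfolding delta_def ae
    by (rule alg_delta[OF _ jf(1)]) (simp add: t_def)
  show "A$1$1 + A$2$2 = K/(2-t)" unfolding ae K_def
    by (rule alg_tr[OF _ _ t2]) (simp_all add: t_def)
  have "A$1$1*A$2$2 - A$1$2*A$2$1 = (1/(2*(2-t)))*(1/(2*(2-t)))*(4 - t*t)" unfolding ae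
    by (rule alg_det[OF _ dg jf(1)]) (simp add: t_def)
  also have "\<dots> = (1/(2*(2-t)))*(1/(2*(2-t)))*((2-t)*(2+t))" by (simp add: algebra_simps)
  also have "\<dots> = (2+t)/(4*(2-t))" using aux_cancel[OF t2] .
  finally show "A$1$1*A$2$2 - A$1$2*A$2$1 = (2+t)/(4*(2-t))" .
qed



lemma det_sqrt_eq:
  fixes j A :: "real^2^2"
  assumes om: "symplectic_form \<omega>" and jj: "j ** j = - mat 1" and A: "A \<in> sym_j \<omega> j"
  shows "det_sqrt \<omega> j A = csqrt (det (half_plus_iA A))"
proof -
  note jf = j_facts[OF jj]
  define S where "S = sym_j \<omega> j"
  define F where "F B = det (half_plus_iA B)" for B
  have Sc: "B \<in> S \<longleftrightarrow> delta j B = 0" for B unfolding S_def by (rule sym_j_char[OF om jf(2)])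
  have nz: "F B \<notin> \<real>\<^sub>\<le>\<^sub>0" if "B \<in> S" for B
    unfolding F_def using D_not_nonpos[OF _ jj] that Sc by blast
  have Fe: "F = (\<lambda>B. Complex (1/4 - (B$1$1*B$2$2 - B$1$2*B$2$1)) ((B$1$1 + B$2$2)/2))"
    unfolding F_def D_formula by (rule refl)
  have cc: "continuous_on S (\<lambda>B::real^2^2. B$i$k)" for i k
    by (rule continuous_on_component, rule continuous_on_component, rule continuous_on_id)
  have contF: "continuous_on S F" unfolding Fe
    by (intro continuous_on_Complex continuous_on_diff continuous_on_mult continuous_on_add continuous_on_divide cc continuous_on_const) simp_all
  have cont0: "continuous_on S (\<lambda>B. csqrt (F B))"
    by (rule continuous_on_compose2[OF continuous_on_csqrt contF]) (use nz in blast)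
  have convS: "convex S" unfolding convex_def
  proof (intro ballI allI impI)
    fix x y :: "real^2^2" and u v :: real assume "x\<in>S" "y\<in>S"
    hence d: "delta j x = 0" "delta j y = 0" using Sc by auto
    have "delta j (u *\<^sub>R x + v *\<^sub>R y) = u * delta j x + v * delta j y"
      by (simp add: delta_def algebra_simps)
    thus "u *\<^sub>R x + v *\<^sub>R y \<in> S" unfolding Sc using d by simp
  qed
  have conS: "connected S" by (rule convex_connected[OF convS])
  have S0: "0 \<in> S" unfolding Sc delta_def by simp
  have F0: "F 0 = 1/4" unfolding Fe by (simp add: complex_eq_iff)
  have f00: "csqrt (F 0) = 1/2" unfolding F0
    by (simp add: csqrt_of_real[of "1/4", simplified] real_sqrt_divide)
  have AS: "A \<in> S" using A unfolding S_def .
  have uniq: "f A = csqrt (F A)" if fc: "continuous_on S f" and fsq: "\<forall>B\<in>S. (f B)^2 = F B"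
      and f0: "Im (f 0) = 0" "Re (f 0) > 0" for f
  proof -
    define h where "h B = f B / csqrt (F B)" for B
    have nz0: "csqrt (F B) \<noteq> 0" if "B \<in> S" for B
    proof
      assume "csqrt (F B) = 0" hence "F B = 0" by simp
      thus False using nz[OF that] by simp
    qed
    have ch: "continuous_on S h" unfolding h_def
      by (rule continuous_on_divide[OF fc cont0]) (use nz0 in blast)
    have hv: "h B = 1 \<or> h B = -1" if "B \<in> S" for B
    proof -
      have "(h B)^2 = 1" unfolding h_def using fsq that nz0[OF that]
        by (simp add: power_divide)
      thus ?thesis using power2_eq_1_iff by blast
    qed
    have "finite (h ` S)" by (rule finite_subset[of _ "{1,-1}"]) (use hv in auto)
    hence "h constant_on S" by (rule continuous_finite_range_constant[OF conS ch])
    then obtain y where y: "\<forall>B\<in>S. h B = y" unfolding constant_on_def by blast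
    have "h 0 = 1"
    proof -
      have "h 0 = 1 \<or> h 0 = -1" using hv[OF S0] .
      moreover have "h 0 \<noteq> -1"
      proof
        assume "h 0 = -1"
        hence "f 0 = - (1/2)" unfolding h_def f00 by (simp add: field_simps)
        thus False using f0 by simp
      qed
      ultimately show ?thesis by blast
    qed
    hence "h A = 1" using y S0 AS by simp
    thus ?thesis unfolding h_def using nz0[OF AS] by simp
  qed
  show ?thesis unfolding det_sqrt_def S_def[symmetric] F_def[symmetric]
  proof (rule the_equality)
    show "\<exists>f. continuous_on S f \<and> (\<forall>B\<in>S. f B ^ 2 = F B) \<and> Im (f 0) = 0 \<and> 0 < Re (f 0) \<and> f A = csqrt (F A)"
      by (rule exI[of _ "\<lambda>B. csqrt (F B)"]) (simp add: cont0 f00)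
  next
    fix r assume "\<exists>f. continuous_on S f \<and> (\<forall>B\<in>S. f B ^ 2 = F B) \<and> Im (f 0) = 0 \<and> 0 < Re (f 0) \<and> f A = r"
    then obtain f where "continuous_on S f" "\<forall>B\<in>S. f B ^ 2 = F B" "Im (f 0) = 0" "0 < Re (f 0)" "f A = r" by blast
    thus "r = csqrt (F A)" using uniq by blast
  qed
qed



lemma sq1_cases: "(u::complex)^2 = 1 \<Longrightarrow> u = \<i>^0 \<or> u = \<i>^2"
  using power2_eq_1_iff[of u] by simp

lemma sqm1_cases: "(u::complex)^2 = -1 \<Longrightarrow> u = \<i>^1 \<or> u = \<i>^3"
proof -
  assume h: "u^2 = -1"
  have "(u - \<i>) * (u + \<i>) = 0" using h by (simp add: algebra_simps power2_eq_square)
  hence "u - \<i> = 0 \<or> u + \<i> = 0" by simp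
  hence "u = \<i> \<or> u = - \<i>" by (auto simp: add_eq_0_iff2)
  moreover have "\<i>^3 = - \<i>" by (simp add: power3_eq_cube)
  ultimately show ?thesis by auto
qed

lemma i_pow_exp: "\<i> ^ n = exp (\<i> * of_real (real n * pi / 2))"
proof -
  have "exp (\<i> * of_real (real n * pi / 2)) = exp (of_nat n * (\<i> * of_real (pi/2)))"
    by (simp add: algebra_simps)
  also have "\<dots> = exp (\<i> * of_real (pi/2)) ^ n" by (rule exp_of_nat_mult)
  also have "exp (\<i> * of_real (pi/2)) = cis (pi/2)" by (simp only: cis_conv_exp)
  also have "cis (pi/2) = \<i>" by (simp add: complex_eq_iff)
  finally show ?thesis by simp
qed

lemma angle_final:
  fixes \<theta> \<phi> R :: real and z s :: complex and m0 :: nat and k :: int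
  assumes z: "z = of_real (norm z) * exp (\<i> * of_real \<theta>)"
    and s: "s = of_real (norm s) * exp (\<i> * of_real \<phi>)"
    and zs: "z * s = \<i>^m0 / of_real R" and R: "R > 0"
    and th: "of_int k * pi / 2 \<le> \<theta>" "\<theta> < (of_int k + 1) * pi / 2"
    and ph: "- (pi/2) < \<phi>" "\<phi> < pi/2"
  shows "\<exists>n::int. int m0 + 4*n = k \<or> int m0 + 4*n = k + 1"
proof -
  define P where "P = norm z * norm s"
  have zs2: "z * s = of_real P * exp (\<i> * of_real (\<theta> + \<phi>))"
    apply (subst z, subst s) unfolding P_def by (simp add: exp_add[symmetric] algebra_simps)
  have ne: "norm (exp (\<i> * of_real x)) = 1" for x by simp
  have "norm (z * s) = P" unfolding zs2 using ne by (simp add: norm_mult P_def)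
  moreover have "norm (z * s) = 1/R" unfolding zs using R by (simp add: norm_divide norm_power)
  ultimately have PR: "P = 1/R" by simp
  have "of_real P * exp (\<i> * of_real (\<theta> + \<phi>)) = \<i>^m0 / of_real R"
    using zs zs2 by simp
  also have "\<dots> = of_real P * \<i>^m0" using PR R by (simp add: field_simps flip: of_real_mult)
  finally have "of_real P * exp (\<i> * of_real (\<theta> + \<phi>)) = of_real P * \<i>^m0" .
  hence "exp (\<i> * of_real (\<theta> + \<phi>)) = exp (\<i> * of_real (real m0 * pi / 2))"
    using PR R by (simp add: i_pow_exp)
  then obtain n :: int where "\<i> * of_real (\<theta> + \<phi>) = \<i> * of_real (real m0 * pi / 2) + of_int (2*n) * pi * \<i>"
    unfolding exp_eq by blast
  hence "Im (\<i> * of_real (\<theta> + \<phi>)) = Im (\<i> * of_real (real m0 * pi / 2) + of_int (2*n) * pi * \<i>)" by simp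
  hence eq: "\<theta> + \<phi> = real_of_int (int m0 + 4*n) * (pi/2)" by (simp add: algebra_simps)
  have "real_of_int (k - 1) * (pi/2) < real_of_int (int m0 + 4*n) * (pi/2)"
    using eq th ph by (simp add: algebra_simps)
  hence l: "k - 1 < int m0 + 4*n" by (simp add: mult_less_cancel_right_pos del: of_int_add of_int_diff of_int_mult)
  have "real_of_int (int m0 + 4*n) * (pi/2) < real_of_int (k + 2) * (pi/2)"
    using eq th ph by (simp add: algebra_simps)
  hence u: "int m0 + 4*n < k + 2" by (simp add: mult_less_cancel_right_pos del: of_int_add of_int_diff of_int_mult)
  from l u show ?thesis by (intro exI[of _ n]) arith
qed



lemma fin_even:
  assumes "even (m0::nat)" "int m0 + 4 * n = k \<or> int m0 + 4 * n = k + 1"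
  shows "int m0 mod 4 = (k + (if even (k + 0) then 0 else 1)) mod (4::int)"
  using assms(2)
proof
  assume h: "int m0 + 4 * n = k"
  have "even k" unfolding h[symmetric] using assms(1) by simp
  thus ?thesis unfolding h[symmetric] by simp
next
  assume h: "int m0 + 4 * n = k + 1"
  hence k: "k = int m0 + 4 * n - 1" by simp
  have "odd k" unfolding k using assms(1) by simp
  thus ?thesis unfolding k by simp
qed
lemma fin_odd:
  assumes "odd (m0::nat)" "int m0 + 4 * n = k \<or> int m0 + 4 * n = k + 1"
  shows "int m0 mod 4 = (k + (if even (k + 1) then 0 else 1)) mod (4::int)"
  using assms(2)
proof
  assume h: "int m0 + 4 * n = k"
  have "odd k" unfolding h[symmetric] using assms(1) by simp
  thus ?thesis unfolding h[symmetric] by simp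
next
  assume h: "int m0 + 4 * n = k + 1"
  hence k: "k = int m0 + 4 * n - 1" by simp
  have "even k" unfolding k using assms(1) by simp
  thus ?thesis unfolding k by simp
qed

lemma alpha_D:
  fixes Q X T :: complex
  assumes "Q \<noteq> 0" "X \<noteq> 0" "2 - T \<noteq> 0"
  shows "(- 2 * \<i> * Q) / (- Q * X) * (\<i> * X / (2 * (2 - T))) = - 1 / (2 - T)"
  using assms by (simp add: field_simps)

theorem mainTheorem6:
  fixes \<omega> :: "real^2 \<Rightarrow> real^2 \<Rightarrow> real"
    and E :: "(complex^2) set"
    and j g :: "real^2^2"
    and z :: complex
    and k :: int
  assumes "symplectic_form \<omega>"
    and "positive_polarization \<omega> E"
    and "j ** j = - mat 1"
    and "E = {u. cmat j *v u = \<i> *s u}"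
    and "in_Mp_star \<omega> E g z"
    and "\<exists>r. is_Arg z r \<and> of_int k * pi / 2 \<le> r \<and> r < (of_int k + 1) * pi / 2"
  shows "let \<epsilon> = (if trace g > 2 then 0 else 1 :: int) in
         mp_index \<omega> j g z mod 4 = (k + (if even (k + \<epsilon>) then 0 else 1)) mod 4"
proof -
  note om = assms(1) and jj = assms(3) and Edef = assms(4)
  note jf = j_facts[OF jj]
  obtain c where c: "c \<noteq> 0" and omc: "\<And>x y. \<omega> x y = c * (x$1 * y$2 - x$2 * y$1)"
    using omega_ex[OF om] by blast
  have Mp: "in_Mp \<omega> E g z" using assms(5) unfolding in_Mp_star_def by (rule conjunct1)
  have inv1: "invertible (mat 1 - g)" using assms(5) unfolding in_Mp_star_def by (rule conjunct2)
  have sg: "symplectic \<omega> g" using Mp unfolding in_Mp_def by (rule conjunct1)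
  have ig: "invertible g" using sg unfolding symplectic_def by (rule conjunct1)
  have "\<omega> (g *v axis 1 1) (g *v axis 2 1) = \<omega> (axis 1 1) (axis 2 1)"
    using sg unfolding symplectic_def by blast
  hence "c * (g$1$1*g$2$2 - g$1$2*g$2$1) = c * 1" unfolding omc by (simp add: mv2 axis_def algebra_simps)
  hence dg: "g$1$1*g$2$2 - g$1$2*g$2$1 = 1" using c by simp
  define t where "t = g$1$1 + g$2$2"
  have trg: "trace g = t" unfolding trace_def t_def by (simp add: sum_2)
  have d1g: "det (mat 1 - g) = 2 - t" unfolding det_2 t_def using dg by (simp add: mat2 algebra_simps)
  have t2: "2 - t \<noteq> 0" using inv1 d1g by (simp add: invertible_det_nz)
  define K where "K = g$1$1 * j$1$1 + g$1$2 * j$2$1 + g$2$1 * j$1$2 - g$2$2 * j$1$1"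
  define A where "A = A_of j g"
  have Ae: "A = (1/(2*(2-t))) *\<^sub>R ((2 *\<^sub>R g - t *\<^sub>R mat 1) ** j)"
    unfolding A_def t_def by (rule A_of_explicit[OF dg inv1 t2[unfolded t_def]])
  have Af: "delta j A = 0" "A$1$1 + A$2$2 = K/(2-t)" "A$1$1*A$2$2 - A$1$2*A$2$1 = (2+t)/(4*(2-t))"
    unfolding Ae K_def t_def by (rule A_facts[OF jf(1,2) dg t2[unfolded t_def]])+
  have AS: "A \<in> sym_j \<omega> j" using sym_j_char[OF om jf(2), THEN iffD2, OF Af(1)] .
  define D where "D = det (half_plus_iA A)"
  have Dnp: "D \<notin> \<real>\<^sub>\<le>\<^sub>0" unfolding D_def by (rule D_not_nonpos[OF Af(1) jj])
  have De: "D = \<i> * (of_real K + \<i> * of_real t) / (2 * (2 - of_real t))"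
  proof -
    have "D = Complex (1/4 - (2+t)/(4*(2-t))) ((K/(2-t))/2)"
      unfolding D_def D_formula Af(2) Af(3) ..
    also have "1/4 - (2+t)/(4*(2-t)) = - t / (2*(2-t))" using t2 by (simp add: field_simps)
    finally show ?thesis using t2 by (simp add: complex_eq_iff field_simps)
  qed
  have Kt: "of_real K + \<i> * of_real t \<noteq> 0"
  proof
    assume "of_real K + \<i> * of_real t = 0"
    hence "D = 0" unfolding De by simp
    thus False using Dnp by simp
  qed
  have ds: "det_sqrt \<omega> j A = csqrt D" unfolding D_def by (rule det_sqrt_eq[OF om jj AS])
  define s where "s = csqrt D"
  define p where "p = j$1$1" define q where "q = j$1$2"
  define v :: "complex^2" where "v = vector [complex_of_real (j$1$2), \<i> - complex_of_real (j$1$1)]"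
  have Ev: "E = range (\<lambda>l. l *s v)" unfolding Edef v_def by (rule E_char[OF jf])
  have N: "det2 (cmat g *v v) (cconj v) = - of_real q * (of_real K + \<i> * of_real t)"
    unfolding v_def q_def K_def t_def by (rule det2_gvvb[OF jf(1)])
  have qnz: "complex_of_real q \<noteq> 0" using jf(3) unfolding q_def by simp
  have Nnz: "det2 (cmat g *v v) (cconj v) \<noteq> 0" unfolding N using qnz Kt by simp
  have v1: "v$1 \<noteq> 0" unfolding v_def using jf(3) by simp
  have vv: "det2 v (cconj v) = - 2 * \<i> * of_real q" unfolding v_def q_def p_def by (rule det2_vvb)
  have z2: "z^2 = det2 v (cconj v) / det2 (cmat g *v v) (cconj v)"
    using Mp unfolding in_Mp_def det_line_alpha[OF Ev v1 ig Nnz] by (rule conjunct2)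
  have s2: "s^2 = D" unfolding s_def by simp
  have w2: "(z * s)^2 = - 1 / (2 - of_real t)"
  proof -
    have "(z * s)^2 = z^2 * s^2" by (simp add: power_mult_distrib)
    also have "\<dots> = (- 2 * \<i> * of_real q) / (- of_real q * (of_real K + \<i> * of_real t)) *
        (\<i> * (of_real K + \<i> * of_real t) / (2 * (2 - of_real t)))"
      unfolding z2 s2 vv N De ..
    also have "\<dots> = - 1 / (2 - of_real t)"
      by (rule alpha_D[OF qnz Kt]) (use t2 in \<open>metis of_real_diff of_real_eq_0_iff of_real_numeral\<close>)
    finally show ?thesis .
  qed
  define R where "R = sqrt \<bar>2 - t\<bar>"
  have R: "R > 0" unfolding R_def using t2 by simp
  have R2: "R^2 = \<bar>2 - t\<bar>" unfolding R_def by simp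
  have wR2: "(z * s * of_real R)^2 = (if t > 2 then 1 else -1)"
  proof -
    have "(z * s * of_real R)^2 = (z * s)^2 * (of_real R)^2" by (simp only: power_mult_distrib)
    also have "\<dots> = - 1 / (2 - of_real t) * of_real (R^2)" unfolding w2 by simp
    finally have "(z * s * of_real R)^2 = - 1 / (2 - of_real t) * of_real (R^2)" .
    also have "\<dots> = of_real (- \<bar>2 - t\<bar> / (2 - t))" unfolding R2 by simp
    also have "- \<bar>2 - t\<bar> / (2 - t) = (if t > 2 then 1 else -1)" using t2 by (auto simp: abs_if divide_simps)
    finally show ?thesis by simp
  qed
  obtain m0 :: nat where m0: "m0 < 4" "z * s * of_real R = \<i>^m0" "even m0 \<longleftrightarrow> t > 2"
  proof (cases "t > 2")
    case True
    hence "z * s * of_real R = \<i>^0 \<or> z * s * of_real R = \<i>^2" using wR2 sq1_cases by simp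
    thus ?thesis
    proof
      assume h: "z * s * of_real R = \<i>^0"
      show ?thesis by (rule that[of 0]) (use True h in simp_all)
    next
      assume h: "z * s * of_real R = \<i>^2"
      show ?thesis by (rule that[of 2]) (use True h in simp_all)
    qed
  next
    case False
    hence "z * s * of_real R = \<i>^1 \<or> z * s * of_real R = \<i>^3" using wR2 sqm1_cases by simp
    thus ?thesis
    proof
      assume h: "z * s * of_real R = \<i>^1"
      show ?thesis by (rule that[of 1]) (use False h in simp_all)
    next
      assume h: "z * s * of_real R = \<i>^3"
      show ?thesis by (rule that[of 3]) (use False h in simp_all)
    qed
  qed
  have zs: "z * s = \<i>^m0 / of_real R" using m0(2) R by (simp add: field_simps)
  have mpi: "mp_index \<omega> j g z = int m0"
    unfolding mp_index_def A_def[symmetric] ds d1g s_def[symmetric] R_def[symmetric]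
  proof (rule the_equality)
    show "0 \<le> int m0 \<and> int m0 < 4 \<and> z * s = \<i> powi int m0 / complex_of_real R"
      using m0(1) zs by simp
  next
    fix m assume h: "0 \<le> m \<and> m < 4 \<and> z * s = \<i> powi m / complex_of_real R"
    hence e: "\<i> powi m = \<i>^m0" using zs R by (simp add: field_simps)
    have "m \<in> {0,1,2,3}" using h by auto
    moreover have "m0 \<in> {0,1,2,3}" using m0(1) by auto
    ultimately show "m = int m0" using e by (auto simp: power_int_def power3_eq_cube complex_eq_iff)
  qed
  obtain \<theta> where th: "is_Arg z \<theta>" "of_int k * pi / 2 \<le> \<theta>" "\<theta> < (of_int k + 1) * pi / 2"
    using assms(6) by blast
  have Dnz: "D \<noteq> 0" using Dnp by auto
  have snz: "s \<noteq> 0" unfolding s_def using Dnz by simp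
  have ArgD: "- pi < Arg D" "Arg D < pi"
  proof -
    show "- pi < Arg D" by (rule mpi_less_Arg)
    have "Arg D \<noteq> pi" unfolding Arg_eq_pi_iff using Dnp
      by (auto simp: complex_nonpos_Reals_iff complex_is_Real_iff)
    thus "Arg D < pi" using Arg_le_pi[of D] by linarith
  qed
  have ph: "- (pi/2) < Arg s" "Arg s < pi/2" unfolding s_def Arg_csqrt using ArgD by auto
  obtain n :: int where n: "int m0 + 4*n = k \<or> int m0 + 4*n = k + 1"
    using angle_final[OF th(1)[unfolded is_Arg_def] Arg_eq[OF snz] zs R th(2,3) ph] by blast
  show ?thesis unfolding Let_def mpi trg
  proof (cases "t > 2")
    case True
    hence "even m0" using m0(3) by simp
    show "int m0 mod 4 = (k + (if even (k + (if 2 < t then 0 else 1)) then 0 else 1)) mod 4"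
      unfolding if_P[OF True] by (rule fin_even[OF \<open>even m0\<close> n])
  next
    case False
    hence "odd m0" using m0(3) by simp
    show "int m0 mod 4 = (k + (if even (k + (if 2 < t then 0 else 1)) then 0 else 1)) mod 4"
      unfolding if_not_P[OF False] by (rule fin_odd[OF \<open>odd m0\<close> n])
  qed
qed


end
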